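(* Consider Method 3.1 (described in the context) and suppose it does not terminate. Then for every limit point $(\bar y,\bar\gamma)$ of the generated sequence $\{(y_i,\gamma_i)\}_{i\in K}$ one has $\bar y\in X^*$.
   Context: Setting: $f,F$ convex on $\mathbb{R}^n$; $D=\{x:F(x)\le0\}$ has nonempty interior; $f$ attains its minimum $f^*$ on $D$; $X^*=\{x\in D:f(x)=f^*\}$, $x^*\in X^*$ fixed; $K=\{0,1,\dots\}$; $\operatorname{epi}(f,\mathbb{R}^n)=\{(x,\gamma):\gamma\ge f(x)\}$; $W'(z,Q)=\{b\in\mathbb{R}^{n+1}:\|b\|=1,\ \langle b,u-z\rangle\le0\ \forall u\in Q\}$ for $Q\subset\mathbb{R}^{n+1}$, and $W''(t,L)=\{a\in\mathbb{R}^n:\|a\|=1,\ \langle a,y-t\rangle\le0\ \forall y\in L\}$ for $L\subset\mathbb{R}^n$. Method 3.1: choose a closed convex bounded $G_0\subset\mathbb{R}^n$ with $x^*\in G_0$ and a closed convex $M_0\subset\mathbb{R}^{n+1}$ with $\operatorname{epi}(f,\mathbb{R}^n)\subset M_0$; points $v'\in\operatorname{int}\operatorname{epi}(f,\mathbb{R}^n)$, $v''\in\operatorname{int}D$; a number $\alpha\le\min\{f(x):x\in G_0\}$; constants $q',q''\ge1$; $i=0$. Step 1: $u_i=(y_i,\gamma_i)$ solves $\min\{\gamma:(x,\gamma)\in M_i,\ x\in G_i,\ \gamma\ge\alpha\}$; if $y_i\in D$ and $f(y_i)=\gamma_i$ stop. Step 2: choose $z_i'$ in the open segment $(v',u_i)$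 with $z_i'\notin\operatorname{int}\operatorname{epi}(f,\mathbb{R}^n)$ and $u_i+q_i'(z_i'-u_i)\in\operatorname{epi}(f,\mathbb{R}^n)$ for some $q_i'\in[1,q']$. Step 3: choose nonempty finite $B_i\subset W'(z_i',\operatorname{epi}(f,\mathbb{R}^n))$; $M_{i+1}=M_i\cap\{u:\langle b,u-z_i'\rangle\le0\ \forall b\in B_i\}$. Step 4: if $y_i\in D$, set $G_{i+1}=G_i$ and go to Step 6; otherwise choose $z_i''\in(v'',y_i)$ with $z_i''\notin\operatorname{int}D$ and $y_i+q_i''(z_i''-y_i)\in D$ for some $q_i''\in[1,q'']$. Step 5: choose nonempty finite $A_i\subset W''(z_i'',D)$; $G_{i+1}=G_i\cap\{x:\langle a,x-z_i''\rangle\le0\ \forall a\in A_i\}$. Step 6: $i\leftarrow i+1$; go to Step 1. *)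

theory Defs
  imports "HOL-Analysis.Analysis"
begin

definition epi :: "('a \<Rightarrow> real) \<Rightarrow> ('a \<times> real) set" where
  "epi f = {(x, g). g \<ge> f x}"

definition Wset :: "'b::real_inner \<Rightarrow> 'b set \<Rightarrow> 'b set" where
  "Wset z Q = {b. norm b = 1 \<and> (\<forall>u\<in>Q. inner b (u - z) \<le> 0)}"

end

theory Submission
  imports Defs
begin

lemma key_lemma:
  fixes u :: "nat \<Rightarrow> 'b::real_inner"
  assumes S: "closed S" "S \<noteq> {}" and e: "e > 0" "cball v e \<subseteq> S" and q: "q \<ge> 0"
    and lim: "u \<longlonglongrightarrow> ubar"
    and H: "\<And>k. u k \<notin> S \<Longrightarrow> \<exists>a t qq. norm a = 1 \<and> (\<forall>w\<in>S. inner a (w - (u k + t *\<^sub>R (v - u k))) \<le> 0)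
        \<and> 0 < t \<and> t < 1 \<and> 0 \<le> qq \<and> qq \<le> q \<and> u k + (qq * t) *\<^sub>R (v - u k) \<in> S
        \<and> inner a (u (Suc k) - (u k + t *\<^sub>R (v - u k))) \<le> 0"
  shows "ubar \<in> S"
proof -
  have bound: "infdist (u k) S \<le> q * norm (v - u k) * norm (u k - u (Suc k)) / e" for k
  proof (cases "u k \<in> S")
    case True
    then show ?thesis using e q by (simp add: infdist_zero)
  next
    case False
    then obtain a t qq where a: "norm a = 1" and sep: "\<forall>w\<in>S. inner a (w - (u k + t *\<^sub>R (v - u k))) \<le> 0"
      and t: "0 < t" "t < 1" and qq: "0 \<le> qq" "qq \<le> q" and p: "u k + (qq * t) *\<^sub>R (v - u k) \<in> S"
      and nx: "inner a (u (Suc k) - (u k + t *\<^sub>R (v - u k))) \<le> 0"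
      using H by blast
    define c where "c = inner a (v - u k)"
    have "v + e *\<^sub>R a \<in> cball v e" using a e by (simp add: dist_norm)
    hence "v + e *\<^sub>R a \<in> S" using e by blast
    hence "inner a (v + e *\<^sub>R a - (u k + t *\<^sub>R (v - u k))) \<le> 0" using sep by blast
    moreover have "v + e *\<^sub>R a - (u k + t *\<^sub>R (v - u k)) = (1 - t) *\<^sub>R (v - u k) + e *\<^sub>R a"
      by (simp add: algebra_simps)
    moreover have "inner a a = 1" using a by (simp add: dot_square_norm)
    ultimately have c1: "(1 - t) * c + e \<le> 0" unfolding c_def by (simp add: inner_add_right)
    have "c < 0"
    proof (rule ccontr)
      assume "\<not> c < 0" then have "(1 - t) * c \<ge> 0" using t by simp
      then show False using c1 e by linarith
    qed
    have "t * c \<le> 0" using \<open>c < 0\<close> t by (simp add: mult_nonneg_nonpos)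
    hence c2: "c \<le> - e" using c1 by (simp add: algebra_simps)
    have "inner a (u (Suc k) - (u k + t *\<^sub>R (v - u k))) = inner a (u (Suc k) - u k) - t * c"
      unfolding c_def by (simp add: inner_diff_right inner_add_right)
    hence "inner a (u (Suc k) - u k) \<le> t * c" using nx by simp
    also have "t * c \<le> - (t * e)" using mult_left_mono[OF c2, of t] t by simp
    finally have "t * e \<le> inner a (u k - u (Suc k))"
      by (simp add: inner_diff_right)
    also have "\<dots> \<le> norm a * norm (u k - u (Suc k))" by (rule norm_cauchy_schwarz)
    finally have te: "t \<le> norm (u k - u (Suc k)) / e" using a e by (simp add: field_simps)
    have "infdist (u k) S \<le> dist (u k) (u k + (qq * t) *\<^sub>R (v - u k))" by (rule infdist_le[OF p])
    also have "\<dots> = qq * t * norm (v - u k)" using qq t by (simp add: dist_norm)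
    also have "\<dots> \<le> q * (norm (u k - u (Suc k)) / e) * norm (v - u k)"
      using qq t te by (intro mult_right_mono mult_mono) auto
    finally show ?thesis by (simp add: field_simps)
  qed
  have "(\<lambda>k. u (Suc k)) \<longlonglongrightarrow> ubar" using lim by (rule LIMSEQ_Suc)
  hence "(\<lambda>k. q * norm (v - u k) * norm (u k - u (Suc k)) / e) \<longlonglongrightarrow> q * norm (v - ubar) * norm (ubar - ubar) / e"
    using lim e by (intro tendsto_intros) auto
  hence g: "(\<lambda>k. q * norm (v - u k) * norm (u k - u (Suc k)) / e) \<longlonglongrightarrow> 0" by simp
  have "(\<lambda>k. infdist (u k) S) \<longlonglongrightarrow> infdist ubar S" using lim by (intro tendsto_intros)
  hence "infdist ubar S \<le> 0" using g bound by (intro tendsto_le[OF trivial_limit_sequentially]) auto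
  hence "infdist ubar S = 0" using infdist_nonneg[of ubar S] by linarith
  thus ?thesis using in_closed_iff_infdist_zero[OF S] by blast
qed

theorem theorem3p1p2:
  fixes f F :: "'a::euclidean_space \<Rightarrow> real"
    and xstar :: 'a
    and G :: "nat \<Rightarrow> 'a set" and M :: "nat \<Rightarrow> ('a \<times> real) set"
    and v1 :: "'a \<times> real" and v2 :: 'a and alpha q1 q2 :: real
    and y :: "nat \<Rightarrow> 'a" and gam :: "nat \<Rightarrow> real"
    and z1 :: "nat \<Rightarrow> 'a \<times> real" and qq1 :: "nat \<Rightarrow> real"
    and B :: "nat \<Rightarrow> ('a \<times> real) set"
    and z2 :: "nat \<Rightarrow> 'a" and qq2 :: "nat \<Rightarrow> real"
    and A :: "nat \<Rightarrow> 'a set"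
    and ybar :: 'a and gbar :: real
  defines "D \<equiv> {x. F x \<le> 0}"
  assumes f_convex: "convex_on UNIV f"
    and F_convex: "convex_on UNIV F"
    and D_int: "interior D \<noteq> {}"
    and xstar_D: "xstar \<in> D"
    and xstar_min: "\<forall>x\<in>D. f xstar \<le> f x"
    \<comment> \<open>initialisation\<close>
    and G0: "closed (G 0)" "convex (G 0)" "bounded (G 0)" "xstar \<in> G 0"
    and M0: "closed (M 0)" "convex (M 0)" "epi f \<subseteq> M 0"
    and v1_int: "v1 \<in> interior (epi f)"
    and v2_int: "v2 \<in> interior D"
    and alpha_le: "\<forall>x\<in>G 0. alpha \<le> f x"
    and q1_ge: "q1 \<ge> 1" and q2_ge: "q2 \<ge> 1"
    \<comment> \<open>Step 1: (y i, gam i) solves the auxiliary problem\<close>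
    and step1_feas: "\<And>i. (y i, gam i) \<in> M i \<and> y i \<in> G i \<and> gam i \<ge> alpha"
    and step1_opt: "\<And>i x g. (x, g) \<in> M i \<Longrightarrow> x \<in> G i \<Longrightarrow> g \<ge> alpha \<Longrightarrow> gam i \<le> g"
    \<comment> \<open>the method does not terminate\<close>
    and no_stop: "\<And>i. \<not> (y i \<in> D \<and> f (y i) = gam i)"
    \<comment> \<open>Step 2\<close>
    and step2: "\<And>i. z1 i \<in> open_segment v1 (y i, gam i) \<and> z1 i \<notin> interior (epi f)
                 \<and> 1 \<le> qq1 i \<and> qq1 i \<le> q1
                 \<and> (y i, gam i) + qq1 i *\<^sub>R (z1 i - (y i, gam i)) \<in> epi f"
    \<comment> \<open>Step 3\<close>
    and step3: "\<And>i. finite (B i) \<and> B i \<noteq> {} \<and> B i \<subseteq> Wset (z1 i) (epi f)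
                 \<and> M (Suc i) = M i \<inter> {u. \<forall>b\<in>B i. inner b (u - z1 i) \<le> 0}"
    \<comment> \<open>Step 4, case y i in D\<close>
    and step4_in: "\<And>i. y i \<in> D \<Longrightarrow> G (Suc i) = G i"
    \<comment> \<open>Steps 4 and 5, case y i not in D\<close>
    and step45_out: "\<And>i. y i \<notin> D \<Longrightarrow>
                 z2 i \<in> open_segment v2 (y i) \<and> z2 i \<notin> interior D
                 \<and> 1 \<le> qq2 i \<and> qq2 i \<le> q2
                 \<and> y i + qq2 i *\<^sub>R (z2 i - y i) \<in> D
                 \<and> finite (A i) \<and> A i \<noteq> {} \<and> A i \<subseteq> Wset (z2 i) D
                 \<and> G (Suc i) = G i \<inter> {x. \<forall>a\<in>A i. inner a (x - z2 i) \<le> 0}"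
    \<comment> \<open>(ybar, gbar) is a limit point of the sequence\<close>
    and limpt: "\<exists>r. strict_mono r \<and> ((\<lambda>k. (y (r k), gam (r k))) \<longlongrightarrow> (ybar, gbar)) sequentially"
  shows "ybar \<in> {x\<in>D. f x = f xstar}"
proof -
  have fcont: "continuous_on UNIV f" using f_convex by (intro convex_on_continuous) auto
  have Fcont: "continuous_on UNIV F" using F_convex by (intro convex_on_continuous) auto
  have Dclosed: "closed D" unfolding D_def
    by (intro closed_Collect_le Fcont continuous_on_const)
  have epi_eq: "epi f = {p. f (fst p) \<le> snd p}" unfolding epi_def by auto
  have Eclosed: "closed (epi f)" unfolding epi_eq
    by (intro closed_Collect_le continuous_on_compose2[OF fcont] continuous_intros) auto
  have Mdec: "M (Suc i) \<subseteq> M i" for i using step3[of i] by blast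
  have Gdec: "G (Suc i) \<subseteq> G i" for i using step4_in[of i] step45_out[of i] by (cases "y i \<in> D") auto
  have Mmono: "m \<le> n \<Longrightarrow> M n \<subseteq> M m" for m n using lift_Suc_antimono_le[of M, OF Mdec] by blast
  have Gmono: "m \<le> n \<Longrightarrow> G n \<subseteq> G m" for m n using lift_Suc_antimono_le[of G, OF Gdec] by blast
  have inv: "xstar \<in> G i \<and> (xstar, f xstar) \<in> M i" for i
  proof (induction i)
    case 0 then show ?case using G0 M0 by (auto simp: epi_def)
  next
    case (Suc i)
    have "(xstar, f xstar) \<in> epi f" by (simp add: epi_def)
    hence "(xstar, f xstar) \<in> M (Suc i)" using Suc step3[of i] by (auto simp: Wset_def)
    moreover have "xstar \<in> G (Suc i)"
    proof (cases "y i \<in> D")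
      case True then show ?thesis using Suc step4_in by auto
    next
      case False then show ?thesis using Suc step45_out[of i] xstar_D by (auto simp: Wset_def)
    qed
    ultimately show ?case by blast
  qed
  have gam_le: "gam i \<le> f xstar" for i
    using step1_opt[of xstar "f xstar" i] inv[of i] alpha_le G0(4) by auto
  obtain r where r: "strict_mono r" and lim: "((\<lambda>k. (y (r k), gam (r k))) \<longlongrightarrow> (ybar, gbar)) sequentially"
    using limpt by blast
  have ylim: "(\<lambda>k. y (r k)) \<longlonglongrightarrow> ybar" using tendsto_fst[OF lim] by simp
  have glim: "(\<lambda>k. gam (r k)) \<longlonglongrightarrow> gbar" using tendsto_snd[OF lim] by simp
  have gbar_le: "gbar \<le> f xstar" using glim gam_le by (intro LIMSEQ_le_const2) auto
  have rSuc: "Suc (r k) \<le> r (Suc k)" for k using r by (simp add: strict_mono_def Suc_leI)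
  obtain e1 where e1: "e1 > 0" "cball v1 e1 \<subseteq> epi f" using v1_int mem_interior_cball by blast
  obtain e2 where e2: "e2 > 0" "cball v2 e2 \<subseteq> D" using v2_int mem_interior_cball by blast
  have epi_ne: "epi f \<noteq> {}" using v1_int interior_subset by blast
  have D_ne: "D \<noteq> {}" using xstar_D by blast
  have "(ybar, gbar) \<in> epi f"
  proof (rule key_lemma[OF Eclosed epi_ne e1 _ lim])
    show "q1 \<ge> 0" using q1_ge by simp
  next
    fix k
    define i where "i = r k"
    define u where "u = (y i, gam i)"
    obtain s where s: "0 < s" "s < 1" "z1 i = (1 - s) *\<^sub>R v1 + s *\<^sub>R u"
      using step2[of i] unfolding u_def in_segment by blast
    have z1: "z1 i = u + (1 - s) *\<^sub>R (v1 - u)" using s(3) by (simp add: algebra_simps)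
    obtain b where b: "b \<in> B i" using step3[of i] by blast
    hence bW: "norm b = 1" "\<forall>w\<in>epi f. inner b (w - z1 i) \<le> 0" using step3[of i] by (auto simp: Wset_def)
    have "(y (r (Suc k)), gam (r (Suc k))) \<in> M (Suc i)"
      using step1_feas[of "r (Suc k)"] Mmono[OF rSuc[of k]] unfolding i_def by blast
    hence nx: "inner b ((y (r (Suc k)), gam (r (Suc k))) - z1 i) \<le> 0" using step3[of i] b by blast
    have pt: "u + (qq1 i * (1 - s)) *\<^sub>R (v1 - u) \<in> epi f"
      using step2[of i] unfolding z1 u_def[symmetric] by (simp add: algebra_simps)
    show "\<exists>a t qq. norm a = 1 \<and> (\<forall>w\<in>epi f. inner a (w - ((y (r k), gam (r k)) + t *\<^sub>R (v1 - (y (r k), gam (r k))))) \<le> 0)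
        \<and> 0 < t \<and> t < 1 \<and> 0 \<le> qq \<and> qq \<le> q1 \<and> (y (r k), gam (r k)) + (qq * t) *\<^sub>R (v1 - (y (r k), gam (r k))) \<in> epi f
        \<and> inner a ((y (r (Suc k)), gam (r (Suc k))) - ((y (r k), gam (r k)) + t *\<^sub>R (v1 - (y (r k), gam (r k))))) \<le> 0"
      if "(y (r k), gam (r k)) \<notin> epi f"
    proof -
      have eq: "(y (r k), gam (r k)) + (1 - s) *\<^sub>R (v1 - (y (r k), gam (r k))) = z1 i"
        using z1 unfolding u_def i_def by simp
      show ?thesis
        apply (rule exI[of _ b], rule exI[of _ "1 - s"], rule exI[of _ "qq1 i"])
        apply (simp only: eq)
        using bW nx pt s(1,2) step2[of i] unfolding u_def i_def by auto
    qed
  qed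
  hence fy: "f ybar \<le> gbar" by (simp add: epi_def)
  have "ybar \<in> D"
  proof (rule key_lemma[OF Dclosed D_ne e2 _ ylim])
    show "q2 \<ge> 0" using q2_ge by simp
  next
    fix k
    define i where "i = r k"
    assume nD: "y (r k) \<notin> D"
    hence st: "z2 i \<in> open_segment v2 (y i) \<and> z2 i \<notin> interior D
                 \<and> 1 \<le> qq2 i \<and> qq2 i \<le> q2
                 \<and> y i + qq2 i *\<^sub>R (z2 i - y i) \<in> D
                 \<and> finite (A i) \<and> A i \<noteq> {} \<and> A i \<subseteq> Wset (z2 i) D
                 \<and> G (Suc i) = G i \<inter> {x. \<forall>a\<in>A i. inner a (x - z2 i) \<le> 0}"
      using step45_out[of i] unfolding i_def by blast
    obtain s where s: "0 < s" "s < 1" "z2 i = (1 - s) *\<^sub>R v2 + s *\<^sub>R y i"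
      using st unfolding in_segment by blast
    have z2: "z2 i = y i + (1 - s) *\<^sub>R (v2 - y i)" using s(3) by (simp add: algebra_simps)
    obtain b where b: "b \<in> A i" using st by blast
    hence bW: "norm b = 1" "\<forall>w\<in>D. inner b (w - z2 i) \<le> 0" using st by (auto simp: Wset_def)
    have "y (r (Suc k)) \<in> G (Suc i)"
      using step1_feas[of "r (Suc k)"] Gmono[OF rSuc[of k]] unfolding i_def by blast
    hence nx: "inner b (y (r (Suc k)) - z2 i) \<le> 0" using st b by blast
    have pt: "y i + (qq2 i * (1 - s)) *\<^sub>R (v2 - y i) \<in> D"
      using st unfolding z2 by (simp add: algebra_simps)
    show "\<exists>a t qq. norm a = 1 \<and> (\<forall>w\<in>D. inner a (w - (y (r k) + t *\<^sub>R (v2 - y (r k)))) \<le> 0)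
        \<and> 0 < t \<and> t < 1 \<and> 0 \<le> qq \<and> qq \<le> q2 \<and> y (r k) + (qq * t) *\<^sub>R (v2 - y (r k)) \<in> D
        \<and> inner a (y (r (Suc k)) - (y (r k) + t *\<^sub>R (v2 - y (r k)))) \<le> 0"
    proof -
      have eq: "y (r k) + (1 - s) *\<^sub>R (v2 - y (r k)) = z2 i"
        using z2 unfolding i_def by simp
      show ?thesis
        apply (rule exI[of _ b], rule exI[of _ "1 - s"], rule exI[of _ "qq2 i"])
        apply (simp only: eq)
        using bW nx pt s(1,2) st unfolding i_def by auto
    qed
  qed
  moreover have "f xstar \<le> f ybar" using xstar_min calculation by blast
  ultimately show ?thesis using fy gbar_le by auto
qed

end
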